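(* Let $V$ be a set of $n$ vertices, $k$ a positive integer with $k<n$, $u,w\in V$ distinct, and $V_{uw}\subseteq V\setminus\{u,w\}$ a set of $k$ vertices partitioned as $V_{uw}=V_u\cup V_w$. Let $T_k$ be the set of all spanning trees $t$ of the complete graph $K_n$ on $V$ with at most $k$ leaves such that every vertex of $V_u$ is adjacent in $t$ only to $u$ and every vertex of $V_w$ is adjacent in $t$ only to $w$. For $t\in T_k$ let $t_h$ be the graph obtained by deleting the vertices of $V_{uw}$ and their incident edges (a Hamiltonian path on $V\setminus V_{uw}$ with end vertices $u$ and $w$). Let $HP_{uw}$ be the convex hull of the characteristic vectors (in $\mathbb{R}^{E'}$, $E'$ the edge set of the complete graph on $V\setminus V_{uw}$) of all Hamiltonian paths on $V\setminus V_{uw}$ with end vertices $u$ and $w$. Then for $t_1,t_2\in T_k$, the vertices $x=x(t_1)$ and $y=x(t_2)$ of $LCMST_{n,k}$ are nonadjacent if and only if the vertices $x_h=x(t_{1,h})$ and $y_h=x(t_{2,h})$ of $HP_{uw}$ are nonadjacent.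
   Context: For a subgraph $t$ of a complete graph, its characteristic vector $x(t)$ has coordinates indexed by the edges of that complete graph, equal to $1$ for edges of $t$ and $0$ otherwise. $LCMST_{n,k}$ is the convex hull of the characteristic vectors (in $\mathbb{R}^{n(n-1)/2}$) of all spanning trees of $K_n$ with at most $k$ leaves (vertices of degree $1$). Two vertices of a polytope are adjacent if the segment joining them is a 1-dimensional face of the polytope. *)

theory Defs
  imports "HOL-Analysis.Analysis"
begin

definition complete_edges :: "'a set \<Rightarrow> 'a set set" where
  "complete_edges V = {{a, b} | a b. a \<in> V \<and> b \<in> V \<and> a \<noteq> b}"

definition connected_graph :: "'a set \<Rightarrow> 'a set set \<Rightarrow> bool" where
  "connected_graph V t \<longleftrightarrow>
     (\<forall>a\<in>V. \<forall>b\<in>V. (a, b) \<in> {(x, y). {x, y} \<in> t}\<^sup>*)"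

definition has_cycle :: "'a set set \<Rightarrow> bool" where
  "has_cycle t \<longleftrightarrow>
     (\<exists>vs. length vs \<ge> 3 \<and> distinct vs \<and>
        (\<forall>i < length vs - 1. {vs ! i, vs ! Suc i} \<in> t) \<and>
        {last vs, hd vs} \<in> t)"

definition spanning_tree :: "'a set \<Rightarrow> 'a set set \<Rightarrow> bool" where
  "spanning_tree V t \<longleftrightarrow> t \<subseteq> complete_edges V \<and> connected_graph V t \<and> \<not> has_cycle t"

definition degree :: "'a set set \<Rightarrow> 'a \<Rightarrow> nat" where
  "degree t v = card {e \<in> t. v \<in> e}"

definition leaves :: "'a set \<Rightarrow> 'a set set \<Rightarrow> 'a set" where
  "leaves V t = {v \<in> V. degree t v = 1}"

definition ham_path :: "'a set \<Rightarrow> 'a \<Rightarrow> 'a \<Rightarrow> 'a set set \<Rightarrow> bool" where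
  "ham_path W u w p \<longleftrightarrow>
     (\<exists>vs. distinct vs \<and> set vs = W \<and> vs \<noteq> [] \<and> hd vs = u \<and> last vs = w \<and>
        p = {{vs ! i, vs ! Suc i} | i. i < length vs - 1})"

text \<open>Characteristic vector of an edge set, indexed by all 2-sets of vertices
  (coordinates outside the edge set of the relevant complete graph are always 0).\<close>
definition charvec :: "('a::finite) set set \<Rightarrow> real ^ ('a set)" where
  "charvec t = (\<chi> e. if e \<in> t then 1 else 0)"

definition LCMST :: "('a::finite) set \<Rightarrow> nat \<Rightarrow> (real ^ ('a set)) set" where
  "LCMST V k = convex hull (charvec ` {t. spanning_tree V t \<and> card (leaves V t) \<le> k})"

definition HP :: "('a::finite) set \<Rightarrow> 'a \<Rightarrow> 'a \<Rightarrow> (real ^ ('a set)) set" where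
  "HP W u w = convex hull (charvec ` {p. ham_path W u w p})"

definition adjacent_vertices :: "'v::euclidean_space set \<Rightarrow> 'v \<Rightarrow> 'v \<Rightarrow> bool" where
  "adjacent_vertices P x y \<longleftrightarrow>
     x extreme_point_of P \<and> y extreme_point_of P \<and>
     closed_segment x y face_of P \<and> aff_dim (closed_segment x y) = 1"

definition Tk :: "'a set \<Rightarrow> nat \<Rightarrow> 'a \<Rightarrow> 'a \<Rightarrow> 'a set \<Rightarrow> 'a set \<Rightarrow> 'a set set set" where
  "Tk V k u w Vu Vw = {t. spanning_tree V t \<and> card (leaves V t) \<le> k \<and>
      (\<forall>v\<in>Vu. \<forall>e\<in>t. v \<in> e \<longrightarrow> e = {v, u}) \<and>
      (\<forall>v\<in>Vw. \<forall>e\<in>t. v \<in> e \<longrightarrow> e = {v, w})}"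

definition delete_verts :: "'a set set \<Rightarrow> 'a set \<Rightarrow> 'a set set" where
  "delete_verts t X = {e \<in> t. e \<inter> X = {}}"

end

theory Submission
  imports Defs
begin


lemma adj_face:
  assumes F: "F face_of P" and x: "x \<in> F" and y: "y \<in> F"
  shows "adjacent_vertices P x y \<longleftrightarrow> adjacent_vertices F x y"
proof -
  have FP: "F \<subseteq> P" using F by (rule face_of_imp_subset)
  have seg: "closed_segment x y \<subseteq> F"
    using face_of_imp_convex[OF F] x y by (simp add: closed_segment_subset)
  have "closed_segment x y face_of P \<longleftrightarrow> closed_segment x y face_of F"
    using F FP seg face_of_subset face_of_trans by blast
  then show ?thesis
    unfolding adjacent_vertices_def using extreme_point_of_face[OF F] x y by blast
qed

lemma adj_transl:
  "adjacent_vertices ((+) c ` S) (c + x) (c + y) \<longleftrightarrow> adjacent_vertices S x y"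
proof -
  have e: "\<And>z. (c + z) extreme_point_of ((+) c ` S) \<longleftrightarrow> z extreme_point_of S"
    using extreme_point_of_translation_eq[of c _ S] by simp
  show ?thesis
    unfolding adjacent_vertices_def e closed_segment_translation
    by (simp add: aff_dim_translation_eq)
qed

lemma inner_charvec:
  fixes a :: "real ^ ('a::finite set)"
  shows "inner a (charvec t) = (\<Sum>e\<in>t. a $ e)"
  unfolding inner_vec_def charvec_def
  by (simp add: if_distrib sum.If_cases)



fun pe :: "'a list \<Rightarrow> 'a set set" where
  "pe (x # y # xs) = insert {x, y} (pe (y # xs))"
| "pe _ = {}"

lemma pe_Cons: "pe (x # ys) = (if ys = [] then {} else insert {x, hd ys} (pe ys))"
  by (cases ys) auto

lemma pe_nth: "pe vs = {{vs ! i, vs ! Suc i} | i. i < length vs - 1}"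
proof (induction vs)
  case Nil then show ?case by simp
next
  case (Cons x ys)
  show ?case
  proof (cases ys)
    case Nil then show ?thesis by simp
  next
    case (Cons y zs)
    have "{{(x # ys) ! i, (x # ys) ! Suc i} | i. i < length (x # ys) - 1}
        = insert {x, y} {{ys ! i, ys ! Suc i} | i. i < length ys - 1}"
    proof (rule set_eqI, rule iffI)
      fix e assume "e \<in> {{(x # ys) ! i, (x # ys) ! Suc i} | i. i < length (x # ys) - 1}"
      then obtain i where i: "i < length (x # ys) - 1" "e = {(x # ys) ! i, (x # ys) ! Suc i}" by blast
      show "e \<in> insert {x, y} {{ys ! i, ys ! Suc i} | i. i < length ys - 1}"
      proof (cases i)
        case 0 then show ?thesis using i Cons by simp
      next
        case (Suc j) then show ?thesis using i Cons by auto
      qed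
    next
      fix e assume "e \<in> insert {x, y} {{ys ! i, ys ! Suc i} | i. i < length ys - 1}"
      then show "e \<in> {{(x # ys) ! i, (x # ys) ! Suc i} | i. i < length (x # ys) - 1}"
      proof
        assume "e = {x, y}" then show ?thesis using Cons by (intro CollectI exI[of _ 0]) auto
      next
        assume "e \<in> {{ys ! i, ys ! Suc i} | i. i < length ys - 1}"
        then obtain i where "i < length ys - 1" "e = {ys ! i, ys ! Suc i}" by blast
        then show ?thesis by (intro CollectI exI[of _ "Suc i"]) auto
      qed
    qed
    then show ?thesis using Cons.IH Cons by simp
  qed
qed

lemma pe_Cons_sub: "pe ys \<subseteq> pe (x # ys)"
  by (auto simp: pe_Cons)

lemma pe_mono: "pe xs \<union> pe ys \<subseteq> pe (xs @ ys)"
proof (induction xs)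
  case Nil then show ?case by simp
next
  case (Cons x xs)
  have "pe (x # xs) \<subseteq> pe (x # (xs @ ys))"
    using Cons by (cases xs) (auto simp: pe_Cons)
  then show ?case using Cons pe_Cons_sub[of "xs @ ys" x] by auto
qed

lemma pe_append: "xs \<noteq> [] \<Longrightarrow> ys \<noteq> [] \<Longrightarrow> pe (xs @ ys) = pe xs \<union> pe ys \<union> {{last xs, hd ys}}"
proof (induction xs)
  case Nil then show ?case by simp
next
  case (Cons x xs)
  show ?case
  proof (cases xs)
    case Nil then show ?thesis using Cons.prems by (auto simp: pe_Cons)
  next
    case (Cons y zs)
    then show ?thesis using Cons.IH Cons.prems by (auto simp: pe_Cons)
  qed
qed

lemma pe_rev: "pe (rev xs) = pe xs"
proof (induction xs)
  case Nil then show ?case by simp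
next
  case (Cons x xs)
  show ?case
  proof (cases xs)
    case Nil then show ?thesis by simp
  next
    case (Cons y zs)
    have "pe (rev (x # xs)) = pe (rev xs @ [x])" by simp
    also have "\<dots> = pe (rev xs) \<union> {{hd xs, x}}"
      using Cons by (subst pe_append) (auto simp: last_rev)
    finally show ?thesis using Cons.IH Cons by (auto simp: insert_commute)
  qed
qed

lemma pe_ex: "e \<in> pe xs \<Longrightarrow> \<exists>a b. e = {a, b} \<and> a \<in> set xs \<and> b \<in> set xs"
  by (induction xs rule: pe.induct) auto

lemma pe_sub: "e \<in> pe xs \<Longrightarrow> e \<subseteq> set xs"
  using pe_ex by fastforce

lemma pe_hd: "distinct (x # y # xs) \<Longrightarrow> {e \<in> pe (x # y # xs). x \<in> e} = {{x, y}}"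
  using pe_sub[of _ "y # xs"] by auto

lemma pe_consec: "{a, b} \<in> pe (xs @ a # b # ys)"
  using pe_mono[of xs "a # b # ys"] by auto

lemma cyc:
  assumes "distinct vs" "length vs \<ge> 3" "pe vs \<subseteq> t" "{last vs, hd vs} \<in> t"
  shows "has_cycle t"
  unfolding has_cycle_def using assms pe_nth[of vs] by blast



lemma max_ext:
  assumes "finite A" "distinct xs" "xs \<noteq> []" "pe xs \<subseteq> H"
  shows "\<exists>ys. distinct (xs @ ys) \<and> pe (xs @ ys) \<subseteq> H \<and> set ys \<subseteq> A \<and>
            (\<forall>z\<in>A. {last (xs @ ys), z} \<in> H \<longrightarrow> z \<in> set (xs @ ys))"
  using assms(2-4)
proof (induction "card (A - set xs)" arbitrary: xs rule: less_induct)
  case less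
  show ?case
  proof (cases "\<forall>z\<in>A. {last xs, z} \<in> H \<longrightarrow> z \<in> set xs")
    case True
    then show ?thesis using less.prems by (intro exI[of _ "[]"]) auto
  next
    case False
    then obtain z where z: "z \<in> A" "{last xs, z} \<in> H" "z \<notin> set xs" by blast
    have lt: "card (A - set (xs @ [z])) < card (A - set xs)"
      using z assms(1) by (intro psubset_card_mono) auto
    have d: "distinct (xs @ [z])" using less.prems z by simp
    have "pe (xs @ [z]) \<subseteq> H" using less.prems z by (subst pe_append) auto
    then obtain ys where ys: "distinct ((xs @ [z]) @ ys)" "pe ((xs @ [z]) @ ys) \<subseteq> H" "set ys \<subseteq> A"
      "\<forall>z'\<in>A. {last ((xs @ [z]) @ ys), z'} \<in> H \<longrightarrow> z' \<in> set ((xs @ [z]) @ ys)"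
      using less.hyps[OF lt d] by blast
    then show ?thesis using z by (intro exI[of _ "z # ys"]) auto
  qed
qed

lemma end_nb:
  assumes "distinct L" "pe L \<subseteq> H" "\<not> has_cycle H" "L = L0 @ [p, e]"
    "z \<in> set L" "{e, z} \<in> H" "z \<noteq> e"
  shows "z = p"
proof (rule ccontr)
  assume "z \<noteq> p"
  then have "z \<in> set L0" using assms by auto
  then obtain A B where AB: "L0 = A @ z # B" by (meson split_list)
  let ?C = "z # B @ [p, e]"
  have "L = A @ ?C" using assms AB by simp
  then have "distinct ?C" "pe ?C \<subseteq> H" using assms pe_mono[of A ?C] by auto
  moreover have "{last ?C, hd ?C} \<in> H" using assms by simp
  ultimately have "has_cycle H" by (intro cyc) auto
  then show False using assms by simp
qed

lemma chord:
  assumes "distinct L" "pe L \<subseteq> H" "\<not> has_cycle H" "L = L1 @ a # M1 @ b # M2" "{a, b} \<in> H"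
  shows "M1 = []"
proof (rule ccontr)
  assume ne: "M1 \<noteq> []"
  let ?C = "a # M1 @ [b]"
  have "L = L1 @ ?C @ M2" using assms by simp
  then have "distinct ?C" "pe ?C \<subseteq> H" using assms pe_mono[of L1 "?C @ M2"] pe_mono[of ?C M2] by auto
  moreover have "{last ?C, hd ?C} \<in> H" using assms by (simp add: insert_commute)
  moreover have "length ?C \<ge> 3" using ne by (cases M1) auto
  ultimately have "has_cycle H" by (intro cyc) auto
  then show False using assms by simp
qed

lemma ear:
  assumes "distinct L" "pe L \<subseteq> H" "\<not> has_cycle H" "L = L1 @ y # M1 @ n # M2"
    "distinct (y # B')" "B' \<noteq> []" "set B' \<inter> set L = {}" "pe (y # B') \<subseteq> H"
    "{last B', n} \<in> H"
  shows False
proof -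
  let ?C = "(y # B') @ n # rev M1"
  have dL: "distinct (y # M1 @ [n])" using assms by auto
  have d: "distinct ?C" using assms(4,5,7) dL by auto
  have s1: "pe (M1 @ [n]) \<subseteq> H" using assms pe_mono[of "L1 @ [y]" "M1 @ [n] @ M2"] pe_mono[of "M1 @ [n]" M2]
    by auto
  have "pe (n # rev M1) = pe (rev (M1 @ [n]))" by simp
  also have "\<dots> = pe (M1 @ [n])" by (rule pe_rev)
  finally have s2: "pe (n # rev M1) \<subseteq> H" using s1 by simp
  have "pe ?C = pe (y # B') \<union> pe (n # rev M1) \<union> {{last (y # B'), hd (n # rev M1)}}"
    by (rule pe_append) auto
  then have pC: "pe ?C \<subseteq> H" using assms s2 by auto
  have "{y, hd (M1 @ [n])} \<in> pe L"
    using assms(4) pe_consec[of y "hd (M1 @ [n])" L1 "tl (M1 @ [n]) @ M2"]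
    by (cases M1) auto
  then have "{last ?C, hd ?C} \<in> H" using assms(2)
    by (cases M1) (auto simp: insert_commute last_rev)
  moreover have "length ?C \<ge> 3" using assms(6) by (cases B') auto
  ultimately have "has_cycle H" using d pC by (intro cyc) auto
  then show False using assms by simp
qed

lemma leave_edge:
  assumes "(a, b) \<in> {(x, y). {x, y} \<in> H}\<^sup>*" "a \<in> S" "b \<notin> S"
  shows "\<exists>x y. x \<in> S \<and> y \<notin> S \<and> {x, y} \<in> H"
  using assms by (induction rule: rtrancl_induct) auto

lemma first_edge:
  assumes "(a, b) \<in> {(x, y). {x, y} \<in> H}\<^sup>*" "a \<noteq> b"
  shows "\<exists>y. {a, y} \<in> H"
  using assms by (induction rule: converse_rtrancl_induct) auto



lemma edgeW: "{a, b} \<in> H \<Longrightarrow> H \<subseteq> complete_edges W \<Longrightarrow> a \<in> W \<and> b \<in> W \<and> a \<noteq> b"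
  unfolding complete_edges_def by (auto simp: doubleton_eq_iff)

lemma two_last: "length xs \<ge> 2 \<Longrightarrow> \<exists>L0 p. xs = L0 @ [p, last xs]"
proof (cases xs rule: rev_cases)
  case (snoc ys e)
  assume "length xs \<ge> 2"
  then show ?thesis using snoc by (cases ys rule: rev_cases) auto
qed simp

lemma tree_to_path:
  fixes W :: "'a set"
  assumes fin: "finite W" and sub: "H \<subseteq> complete_edges W" and acyc: "\<not> has_cycle H"
    and conn: "connected_graph W H" and uW: "u \<in> W" and wW: "w \<in> W" and uw: "u \<noteq> w"
    and deg2: "\<forall>v\<in>W-{u,w}. \<exists>x y. x \<noteq> y \<and> {v,x} \<in> H \<and> {v,y} \<in> H"
  shows "\<exists>L. distinct L \<and> set L = W \<and> hd L = u \<and> last L = w \<and> H = pe L"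
proof -
  have ed: "\<And>a b. {a, b} \<in> H \<Longrightarrow> a \<in> W \<and> b \<in> W \<and> a \<noteq> b" using sub edgeW by metis
  have R: "\<And>a b. a \<in> W \<Longrightarrow> b \<in> W \<Longrightarrow> (a, b) \<in> {(x, y). {x, y} \<in> H}\<^sup>*"
    using conn unfolding connected_graph_def by blast
  obtain y where y: "{u, y} \<in> H" using first_edge[OF R[OF uW wW] uw] by blast
  have yW: "y \<in> W" and uy: "u \<noteq> y" using ed[OF y] by auto
  have "pe [u, y] \<subseteq> H" using y by simp
  then obtain ys where ys: "distinct ([u, y] @ ys)" "pe ([u, y] @ ys) \<subseteq> H" "set ys \<subseteq> W"
    "\<forall>z\<in>W. {last ([u, y] @ ys), z} \<in> H \<longrightarrow> z \<in> set ([u, y] @ ys)"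
    using max_ext[of W "[u, y]" H] fin uy by auto
  define L where "L = [u, y] @ ys"
  have dL: "distinct L" and pL: "pe L \<subseteq> H" and sL: "set L \<subseteq> W"
    and mL: "\<forall>z\<in>W. {last L, z} \<in> H \<longrightarrow> z \<in> set L"
    using ys uW yW unfolding L_def by auto
  have hdL: "hd L = u" and lenL: "length L \<ge> 2" unfolding L_def by auto
  have lastL: "last L = w"
  proof (rule ccontr)
    assume ne: "last L \<noteq> w"
    have "last L \<noteq> u" using dL unfolding L_def by (cases ys rule: rev_cases) auto
    moreover have "last L \<in> W" using sL lenL by (cases L) auto
    ultimately obtain x1 x2 where x: "x1 \<noteq> x2" "{last L, x1} \<in> H" "{last L, x2} \<in> H"
      using deg2 ne by blast
    obtain L0 p where L0: "L = L0 @ [p, last L]" using two_last[OF lenL] by blast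
    have "x1 = p" using end_nb[OF dL pL acyc L0] x mL ed by blast
    moreover have "x2 = p" using end_nb[OF dL pL acyc L0] x mL ed by blast
    ultimately show False using x by simp
  qed
  have cover: "set L = W"
  proof (rule ccontr)
    assume "set L \<noteq> W"
    then obtain z where z: "z \<in> W" "z \<notin> set L" using sL by blast
    have uL: "u \<in> set L" using hdL lenL by (cases L) auto
    have wL: "w \<in> set L" using lastL lenL by (cases L rule: rev_cases) auto
    obtain y' z' where yz: "y' \<in> set L" "z' \<notin> set L" "{y', z'} \<in> H"
      using leave_edge[OF R[OF uW z(1)] uL z(2)] by blast
    have z'W: "z' \<in> W" and yz': "y' \<noteq> z'" using ed[OF yz(3)] by auto
    have "pe [y', z'] \<subseteq> H" using yz by simp
    then obtain bs where bs: "distinct ([y', z'] @ bs)" "pe ([y', z'] @ bs) \<subseteq> H" "set bs \<subseteq> W - set L"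
      "\<forall>z\<in>W - set L. {last ([y', z'] @ bs), z} \<in> H \<longrightarrow> z \<in> set ([y', z'] @ bs)"
      using max_ext[of "W - set L" "[y', z']" H] fin yz' by auto
    define B where "B = [y', z'] @ bs"
    have dB: "distinct B" and pB: "pe B \<subseteq> H" and lenB: "length B \<ge> 2"
      and mB: "\<forall>z\<in>W - set L. {last B, z} \<in> H \<longrightarrow> z \<in> set B"
      using bs unfolding B_def by auto
    have eL: "last B \<notin> set L" and eW: "last B \<in> W"
      using bs yz z'W unfolding B_def by (cases bs rule: rev_cases; auto)+
    have "last B \<in> W - {u, w}" using eL eW uL wL by blast
    then obtain x1 x2 where x: "x1 \<noteq> x2" "{last B, x1} \<in> H" "{last B, x2} \<in> H"
      using deg2 by blast
    obtain B0 p' where B0: "B = B0 @ [p', last B]" using two_last[OF lenB] by blast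
    obtain n2 where n2: "n2 \<noteq> p'" "{last B, n2} \<in> H" using x by (metis x(1))
    have n2W: "n2 \<in> W" and n2e: "n2 \<noteq> last B" using ed[OF n2(2)] by auto
    show False
    proof (cases "n2 \<in> set L")
      case False
      then have "n2 \<in> set B" using mB n2 n2W by blast
      then have "n2 = p'" using end_nb[OF dB pB acyc B0] n2 n2e by blast
      then show False using n2 by simp
    next
      case True
      show False
      proof (cases "n2 = y'")
        case True
        have "bs \<noteq> []"
        proof
          assume "bs = []"
          then have "B = [y', z']" unfolding B_def by simp
          then have "p' = y'" using B0 by (cases B0) (auto simp: Cons_eq_append_conv)
          then show False using n2 True by simp
        qed
        then have "length B \<ge> 3" unfolding B_def by (cases bs) auto
        moreover have "{last B, hd B} \<in> H" using n2 True unfolding B_def by simp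
        ultimately have "has_cycle H" using dB pB by (intro cyc) auto
        then show False using acyc by simp
      next
        case False
        obtain L1 L2 where L12: "L = L1 @ y' # L2" using yz(1) by (meson split_list)
        have Bdata: "distinct (y' # (z' # bs))" "z' # bs \<noteq> []" "set (z' # bs) \<inter> set L = {}"
          "pe (y' # (z' # bs)) \<subseteq> H" "{last (z' # bs), n2} \<in> H"
          using dB pB bs yz n2 unfolding B_def by auto
        have "n2 \<in> set L1 \<or> n2 \<in> set L2" using True False L12 by auto
        then show False
        proof
          assume "n2 \<in> set L2"
          then obtain M1 M2 where "L2 = M1 @ n2 # M2" by (meson split_list)
          then show False using ear[OF dL pL acyc _ Bdata(1-3) _ Bdata(5)] Bdata(4) L12 by auto
        next
          assume "n2 \<in> set L1"
          then obtain N1 N2 where N: "L1 = N1 @ n2 # N2" by (meson split_list)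
          have r: "rev L = rev L2 @ y' # rev N2 @ n2 # rev N1" using L12 N by simp
          have "distinct (rev L)" "pe (rev L) \<subseteq> H" "set (z' # bs) \<inter> set (rev L) = {}"
            using dL pL Bdata(3) by (auto simp: pe_rev)
          then show False using ear[OF _ _ acyc r Bdata(1,2) _ Bdata(4,5)] by blast
        qed
      qed
    qed
  qed
  have "H \<subseteq> pe L"
  proof
    fix e assume e: "e \<in> H"
    then obtain a b where ab: "e = {a, b}" "a \<in> W" "b \<in> W" "a \<noteq> b"
      using sub unfolding complete_edges_def by blast
    obtain L1 L2 where L12: "L = L1 @ a # L2" using ab cover by (meson split_list)
    have "b \<in> set L1 \<or> b \<in> set L2" using ab cover L12 by auto
    then show "e \<in> pe L"
    proof
      assume "b \<in> set L2"
      then obtain M1 M2 where M: "L2 = M1 @ b # M2" by (meson split_list)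
      have "M1 = []" using chord[OF dL pL acyc _ ] L12 M e ab by blast
      then show ?thesis using L12 M ab pe_consec[of a b L1 M2] by simp
    next
      assume "b \<in> set L1"
      then obtain N1 N2 where N: "L1 = N1 @ b # N2" by (meson split_list)
      have r: "rev L = rev L2 @ a # rev N2 @ b # rev N1" using L12 N by simp
      have "rev N2 = []" using chord[OF _ _ acyc r] dL pL e ab by (simp add: pe_rev)
      then show ?thesis using L12 N ab pe_consec[of b a N1 L2] by (simp add: insert_commute)
    qed
  qed
  then have "H = pe L" using pL by blast
  then show ?thesis using dL cover hdL lastL by blast
qed



lemma has_cycle_mono: "has_cycle H \<Longrightarrow> H \<subseteq> t \<Longrightarrow> has_cycle t"
  unfolding has_cycle_def by blast

lemma acyclic_rank:
  fixes rank :: "'a \<Rightarrow> nat"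
  assumes neq: "\<And>x y. {x, y} \<in> t \<Longrightarrow> rank x \<noteq> rank y"
    and low: "\<And>x y. {x, y} \<in> t \<Longrightarrow> rank y < rank x \<Longrightarrow> y = f x"
  shows "\<not> has_cycle t"
proof
  assume "has_cycle t"
  then obtain vs where vs: "length vs \<ge> 3" "distinct vs"
    "\<forall>i < length vs - 1. {vs ! i, vs ! Suc i} \<in> t" "{last vs, hd vs} \<in> t"
    unfolding has_cycle_def by blast
  define n where "n = length vs"
  have ne: "vs \<noteq> []" using vs by auto
  have "finite (rank ` set vs)" "rank ` set vs \<noteq> {}" using ne by auto
  then have "Max (rank ` set vs) \<in> rank ` set vs" by (rule Max_in)
  then obtain i where i: "i < n" "rank (vs ! i) = Max (rank ` set vs)"
    unfolding n_def by (auto simp: in_set_conv_nth)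
  have le: "\<And>j. j < n \<Longrightarrow> rank (vs ! j) \<le> rank (vs ! i)"
    using i unfolding n_def by (simp add: Max_ge)
  have lastv: "last vs = vs ! (n - 1)" and hdv: "hd vs = vs ! 0" using ne unfolding n_def
    by (auto simp: last_conv_nth hd_conv_nth)
  have "\<exists>j1 j2. j1 < n \<and> j2 < n \<and> j1 \<noteq> j2 \<and> {vs ! i, vs ! j1} \<in> t \<and> {vs ! i, vs ! j2} \<in> t"
  proof (cases "i = 0")
    case True
    have "{vs ! 0, vs ! 1} \<in> t" using vs(1,3) unfolding n_def by force
    moreover have "{vs ! 0, vs ! (n - 1)} \<in> t" using vs(4) lastv hdv by (simp add: insert_commute)
    ultimately show ?thesis using True vs(1) unfolding n_def
      by (intro exI[of _ 1] exI[of _ "n - 1"]) (auto simp: n_def)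
  next
    case False
    show ?thesis
    proof (cases "i = n - 1")
      case True
      have "{vs ! (n - 2), vs ! Suc (n - 2)} \<in> t" using vs(1,3) unfolding n_def by force
      moreover have "Suc (n - 2) = n - 1" using vs(1) unfolding n_def by simp
      moreover have "{vs ! (n - 1), vs ! 0} \<in> t" using vs(4) lastv hdv by simp
      ultimately show ?thesis using True vs(1) unfolding n_def
        by (intro exI[of _ "n - 2"] exI[of _ 0]) (auto simp: n_def insert_commute)
    next
      case False2: False
      have "i - 1 < length vs - 1" using i False unfolding n_def by simp
      then have "{vs ! (i - 1), vs ! Suc (i - 1)} \<in> t" using vs(3) by blast
      moreover have "Suc (i - 1) = i" using False by simp
      moreover have "{vs ! i, vs ! Suc i} \<in> t" using vs(3) i False2 unfolding n_def by simp
      ultimately show ?thesis using i False False2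
        by (intro exI[of _ "i - 1"] exI[of _ "Suc i"]) (auto simp: insert_commute)
    qed
  qed
  then obtain j1 j2 where j: "j1 < n" "j2 < n" "j1 \<noteq> j2" "{vs ! i, vs ! j1} \<in> t" "{vs ! i, vs ! j2} \<in> t"
    by blast
  have "rank (vs ! j1) < rank (vs ! i)" using le[OF j(1)] neq[OF j(4)] by simp
  then have "vs ! j1 = f (vs ! i)" using low[OF j(4)] by simp
  moreover have "rank (vs ! j2) < rank (vs ! i)" using le[OF j(2)] neq[OF j(5)] by simp
  then have "vs ! j2 = f (vs ! i)" using low[OF j(5)] by simp
  ultimately have "vs ! j1 = vs ! j2" by simp
  then show False using j vs(2) unfolding n_def by (simp add: nth_eq_iff_index_eq)
qed

lemma walk_reach: "pe L \<subseteq> t \<Longrightarrow> x \<in> set L \<Longrightarrow> (hd L, x) \<in> {(a, b). {a, b} \<in> t}\<^sup>*"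
proof (induction L rule: pe.induct)
  case (1 a b xs)
  then have "(b, x) \<in> {(a, b). {a, b} \<in> t}\<^sup>* \<or> x = a" by auto
  moreover have "(a, b) \<in> {(a, b). {a, b} \<in> t}" using 1 by auto
  ultimately show ?case by (auto intro: converse_rtrancl_into_rtrancl)
qed auto

lemma pe_distinct: "distinct L \<Longrightarrow> e \<in> pe L \<Longrightarrow> \<exists>a b. e = {a, b} \<and> a \<noteq> b \<and> a \<in> set L \<and> b \<in> set L"
  by (induction L rule: pe.induct) auto

lemma card_two: "finite S \<Longrightarrow> card S \<ge> 2 \<Longrightarrow> \<exists>x y. x \<in> S \<and> y \<in> S \<and> x \<noteq> y"
  using card_le_Suc0_iff_eq[of S] by auto

lemma card_ge_two: "finite S \<Longrightarrow> x \<in> S \<Longrightarrow> y \<in> S \<Longrightarrow> x \<noteq> y \<Longrightarrow> card S \<ge> 2"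
  using card_mono[of S "{x, y}"] by auto



lemma charvec_union: "A \<inter> B = {} \<Longrightarrow> charvec (A \<union> B) = charvec A + charvec B"
  unfolding charvec_def by (auto simp: vec_eq_iff)

locale lsetup =
  fixes V :: "('a::finite) set" and k :: nat and u w :: 'a and Vu Vw :: "'a set"
  assumes uV: "u \<in> V" and wV: "w \<in> V" and uw: "u \<noteq> w"
    and Vsub: "Vu \<union> Vw \<subseteq> V - {u, w}" and cardk: "card (Vu \<union> Vw) = k" and disj: "Vu \<inter> Vw = {}"
begin

definition pv where "pv v = (if v \<in> Vu then {v, u} else {v, w})"
definition PP where "PP = pv ` (Vu \<union> Vw)"

lemma v_pv: "v \<in> pv v" unfolding pv_def by auto

lemma tree_edge: "spanning_tree V t \<Longrightarrow> e \<in> t \<Longrightarrow> \<exists>a b. e = {a, b} \<and> a \<in> V \<and> b \<in> V \<and> a \<noteq> b"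
  unfolding spanning_tree_def complete_edges_def by blast

lemma tree_has_edge:
  assumes "spanning_tree V t" "v \<in> V" shows "\<exists>e\<in>t. v \<in> e"
proof -
  define b where "b = (if v = u then w else u)"
  have "b \<in> V" "b \<noteq> v" using uV wV uw unfolding b_def by auto
  then have "(v, b) \<in> {(x, y). {x, y} \<in> t}\<^sup>*"
    using assms unfolding spanning_tree_def connected_graph_def by blast
  then obtain y where "{v, y} \<in> t" using first_edge \<open>b \<noteq> v\<close> by metis
  then show ?thesis by blast
qed

lemma cond_iff:
  "((\<forall>v\<in>Vu. \<forall>e\<in>t. v \<in> e \<longrightarrow> e = {v, u}) \<and> (\<forall>v\<in>Vw. \<forall>e\<in>t. v \<in> e \<longrightarrow> e = {v, w}))
   \<longleftrightarrow> (\<forall>v\<in>Vu \<union> Vw. \<forall>e\<in>t. v \<in> e \<longrightarrow> e = pv v)"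
  using disj unfolding pv_def by auto

definition avec :: "real ^ ('a set)" where
  "avec = (\<chi> e. \<Sum>v\<in>Vu \<union> Vw. ((if v \<in> e then 1 else 0) - (if e = pv v then 2 else 0)))"

lemma avec_inner:
  "inner avec (charvec t) = (\<Sum>v\<in>Vu \<union> Vw. (real (degree t v) - (if pv v \<in> t then 2 else 0)))"
proof -
  have "inner avec (charvec t) =
      (\<Sum>e\<in>t. \<Sum>v\<in>Vu \<union> Vw. ((if v \<in> e then 1 else 0) - (if e = pv v then 2 else 0)))"
    by (simp add: inner_charvec avec_def)
  also have "\<dots> = (\<Sum>v\<in>Vu \<union> Vw. \<Sum>e\<in>t. ((if v \<in> e then 1 else 0) - (if e = pv v then 2 else 0)))"
    by (rule sum.swap)
  also have "\<dots> = (\<Sum>v\<in>Vu \<union> Vw. (real (degree t v) - (if pv v \<in> t then 2 else 0)))"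
  proof (rule sum.cong[OF refl])
    fix v
    have fin: "finite t" by simp
    have a: "(\<Sum>e\<in>t. (if v \<in> e then 1 else 0::real)) = real (card {e\<in>t. v \<in> e})"
      using fin by (simp add: sum.inter_filter[symmetric])
    have b: "(\<Sum>e\<in>t. (if e = pv v then 2 else 0::real)) = (if pv v \<in> t then 2 else 0)"
      using sum.delta'[OF fin, of "pv v" "\<lambda>_. 2::real"] by simp
    show "(\<Sum>e\<in>t. ((if v \<in> e then 1 else 0) - (if e = pv v then 2 else 0::real))) =
        real (degree t v) - (if pv v \<in> t then 2 else 0)"
      unfolding sum_subtractf a b degree_def by (rule refl)
  qed
  finally show ?thesis .
qed

lemma term_bound:
  assumes st: "spanning_tree V t" and v: "v \<in> Vu \<union> Vw"
  shows "real (degree t v) - (if pv v \<in> t then 2 else 0) \<ge> -1 \<and>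
    (real (degree t v) - (if pv v \<in> t then 2 else 0) = -1 \<longleftrightarrow> (\<forall>e\<in>t. v \<in> e \<longrightarrow> e = pv v))"
proof -
  have vV: "v \<in> V" using v Vsub by blast
  obtain e0 where e0: "e0 \<in> t" "v \<in> e0" using tree_has_edge[OF st vV] by blast
  have fin: "finite {e\<in>t. v \<in> e}" by simp
  have d1: "degree t v \<ge> 1" unfolding degree_def using e0 fin
    by (metis (mono_tags, lifting) One_nat_def Suc_leI card_gt_0_iff empty_iff mem_Collect_eq)
  show ?thesis
  proof (cases "\<forall>e\<in>t. v \<in> e \<longrightarrow> e = pv v")
    case True
    then have "{e\<in>t. v \<in> e} = {pv v}" "pv v \<in> t" using e0 v_pv[of v] by auto
    then have "degree t v = 1" unfolding degree_def by simp
    then show ?thesis using True \<open>pv v \<in> t\<close> by simp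
  next
    case False
    then obtain e1 where e1: "e1 \<in> t" "v \<in> e1" "e1 \<noteq> pv v" by blast
    show ?thesis
    proof (cases "pv v \<in> t")
      case True
      have "degree t v \<ge> 2" unfolding degree_def
        using card_ge_two[OF fin, of e1 "pv v"] e1 True v_pv[of v] by auto
      then show ?thesis using False True by auto
    next
      case False2: False
      then show ?thesis using False d1 by auto
    qed
  qed
qed

lemma inner_ge:
  assumes st: "spanning_tree V t"
  shows "inner avec (charvec t) \<ge> - real k \<and>
    (inner avec (charvec t) = - real k \<longleftrightarrow> (\<forall>v\<in>Vu \<union> Vw. \<forall>e\<in>t. v \<in> e \<longrightarrow> e = pv v))"
proof -
  define g where "g v = real (degree t v) - (if pv v \<in> t then 2 else 0) + 1" for v
  have g0: "\<forall>v\<in>Vu \<union> Vw. g v \<ge> 0" using term_bound[OF st] unfolding g_def by force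
  have "(\<Sum>v\<in>Vu \<union> Vw. g v) = inner avec (charvec t) + real k"
    unfolding g_def avec_inner using cardk by (simp add: sum.distrib)
  moreover have "(\<Sum>v\<in>Vu \<union> Vw. g v) \<ge> 0" using g0 by (intro sum_nonneg) auto
  moreover have "(\<Sum>v\<in>Vu \<union> Vw. g v) = 0 \<longleftrightarrow> (\<forall>v\<in>Vu \<union> Vw. g v = 0)"
    using g0 by (intro sum_nonneg_eq_0_iff) auto
  moreover have "\<forall>v\<in>Vu \<union> Vw. (g v = 0 \<longleftrightarrow> (\<forall>e\<in>t. v \<in> e \<longrightarrow> e = pv v))"
  proof
    fix v assume v: "v \<in> Vu \<union> Vw"
    have e: "g v = 0 \<longleftrightarrow> real (degree t v) - (if pv v \<in> t then 2 else 0) = -1"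
      unfolding g_def by arith
    show "g v = 0 \<longleftrightarrow> (\<forall>e\<in>t. v \<in> e \<longrightarrow> e = pv v)"
      unfolding e using term_bound[OF st v] by blast
  qed
  ultimately have "inner avec (charvec t) \<ge> - real k"
    and "inner avec (charvec t) = - real k \<longleftrightarrow> (\<forall>v\<in>Vu \<union> Vw. \<forall>e\<in>t. v \<in> e \<longrightarrow> e = pv v)"
    by (linarith, metis add.commute add_eq_0_iff2 neg_equal_iff_equal)
  then show ?thesis by blast
qed

lemma Tk_iff:
  "t \<in> Tk V k u w Vu Vw \<longleftrightarrow>
     spanning_tree V t \<and> card (leaves V t) \<le> k \<and> inner avec (charvec t) = - real k"
proof
  assume "t \<in> Tk V k u w Vu Vw"
  then have a: "spanning_tree V t" "card (leaves V t) \<le> k"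
    "(\<forall>v\<in>Vu. \<forall>e\<in>t. v \<in> e \<longrightarrow> e = {v, u}) \<and> (\<forall>v\<in>Vw. \<forall>e\<in>t. v \<in> e \<longrightarrow> e = {v, w})"
    unfolding Tk_def by auto
  then show "spanning_tree V t \<and> card (leaves V t) \<le> k \<and> inner avec (charvec t) = - real k"
    using cond_iff[of t] inner_ge[OF a(1)] by simp
next
  assume a: "spanning_tree V t \<and> card (leaves V t) \<le> k \<and> inner avec (charvec t) = - real k"
  then have "(\<forall>v\<in>Vu. \<forall>e\<in>t. v \<in> e \<longrightarrow> e = {v, u}) \<and> (\<forall>v\<in>Vw. \<forall>e\<in>t. v \<in> e \<longrightarrow> e = {v, w})"
    using cond_iff[of t] inner_ge[of t] by simp
  then show "t \<in> Tk V k u w Vu Vw" using a unfolding Tk_def by simp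
qed

end


context lsetup begin

lemma Tk_struct:
  assumes t: "t \<in> Tk V k u w Vu Vw"
  shows "ham_path (V - (Vu \<union> Vw)) u w (delete_verts t (Vu \<union> Vw)) \<and>
    t = delete_verts t (Vu \<union> Vw) \<union> PP \<and> delete_verts t (Vu \<union> Vw) \<inter> PP = {} \<and> Vu \<noteq> {} \<and> Vw \<noteq> {}"
proof -
  define X where "X = Vu \<union> Vw"
  define W where "W = V - X"
  define H where "H = delete_verts t X"
  have st: "spanning_tree V t" and lk: "card (leaves V t) \<le> k"
    and cond: "\<forall>v\<in>X. \<forall>e\<in>t. v \<in> e \<longrightarrow> e = pv v"
    using t cond_iff[of t] unfolding Tk_def X_def by auto
  have XV: "X \<subseteq> V" and uX: "u \<notin> X" and wX: "w \<notin> X" using Vsub unfolding X_def by auto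
  have uW: "u \<in> W" and wW: "w \<in> W" using uV wV uX wX unfolding W_def by auto
  have pvt: "\<forall>v\<in>X. pv v \<in> t"
  proof
    fix v assume v: "v \<in> X"
    then obtain e where "e \<in> t" "v \<in> e" using tree_has_edge[OF st] XV by blast
    then show "pv v \<in> t" using cond[rule_format, of v e] v by simp
  qed
  have deg1: "\<forall>v\<in>X. degree t v = 1"
  proof
    fix v assume v: "v \<in> X"
    have "{e\<in>t. v \<in> e} = {pv v}" using cond v pvt v_pv[of v] by auto
    then show "degree t v = 1" unfolding degree_def by simp
  qed
  have noleaf: "\<forall>x\<in>W. degree t x \<noteq> 1"
  proof (intro ballI notI)
    fix x assume x: "x \<in> W" "degree t x = 1"
    have "insert x X \<subseteq> leaves V t" using x deg1 XV unfolding leaves_def W_def by auto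
    then have "card (insert x X) \<le> card (leaves V t)" by (intro card_mono) auto
    moreover have "card (insert x X) = k + 1" using x cardk unfolding W_def X_def by simp
    ultimately show False using lk by simp
  qed
  have ted: "\<forall>e\<in>t. \<exists>a b. e = {a, b} \<and> a \<in> V \<and> b \<in> V \<and> a \<noteq> b" using tree_edge[OF st] by blast
  have Ht: "H \<subseteq> t" unfolding H_def delete_verts_def by blast
  have Hsub: "H \<subseteq> complete_edges W"
  proof
    fix e assume e: "e \<in> H"
    then have et: "e \<in> t" and eX: "e \<inter> X = {}" unfolding H_def delete_verts_def by auto
    obtain a b where ab: "e = {a, b}" "a \<in> V" "b \<in> V" "a \<noteq> b" using ted et by meson
    have "a \<in> W" "b \<in> W" using ab eX unfolding W_def by auto
    then show "e \<in> complete_edges W" unfolding complete_edges_def using ab by blast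
  qed
  have acyc: "\<not> has_cycle H"
    using st has_cycle_mono[OF _ Ht] unfolding spanning_tree_def by blast
  have conn: "connected_graph W H"
    unfolding connected_graph_def
  proof (intro ballI)
    fix a b assume a: "a \<in> W" and b: "b \<in> W"
    have Rt: "(a, b) \<in> {(x, y). {x, y} \<in> t}\<^sup>*"
      using st a b unfolding spanning_tree_def connected_graph_def W_def by blast
    have "(x \<in> W \<longrightarrow> (a, x) \<in> {(x, y). {x, y} \<in> H}\<^sup>*) \<and>
          (x \<in> Vu \<longrightarrow> (a, u) \<in> {(x, y). {x, y} \<in> H}\<^sup>*) \<and>
          (x \<in> Vw \<longrightarrow> (a, w) \<in> {(x, y). {x, y} \<in> H}\<^sup>*)"
      if "(a, x) \<in> {(x, y). {x, y} \<in> t}\<^sup>*" for x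
      using that
    proof (induction rule: rtrancl_induct)
      case base
      then show ?case using a unfolding W_def X_def by auto
    next
      case (step y z)
      have yz: "{y, z} \<in> t" using step.hyps(2) by simp
      then obtain p q where pq: "{y, z} = {p, q}" "p \<in> V" "q \<in> V" "p \<noteq> q" using ted by blast
      have yV: "y \<in> V" and zV: "z \<in> V" and yzne: "y \<noteq> z" using pq by (auto simp: doubleton_eq_iff)
      have cases: "\<And>x. x \<in> V \<Longrightarrow> x \<in> W \<or> x \<in> Vu \<or> x \<in> Vw" unfolding W_def X_def by blast
      have pvu: "\<And>x. x \<in> Vu \<Longrightarrow> pv x = {x, u}" unfolding pv_def by simp
      have pvw: "\<And>x. x \<in> Vw \<Longrightarrow> pv x = {x, w}" using disj unfolding pv_def by auto
      have RH: "(a, y) \<in> {(x, y). {x, y} \<in> H}\<^sup>* \<Longrightarrow> {y, z} \<in> H \<Longrightarrow> (a, z) \<in> {(x, y). {x, y} \<in> H}\<^sup>*"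
        by (rule rtrancl_into_rtrancl) auto
      show ?case
      proof (cases "z \<in> W")
        case zW: True
        have zn: "z \<notin> Vu" "z \<notin> Vw" using zW unfolding W_def X_def by auto
        consider "y \<in> W" | "y \<in> Vu" | "y \<in> Vw" using cases[OF yV] by blast
        then show ?thesis
        proof cases
          case 1
          then have "{y, z} \<in> H" using yz zW unfolding H_def delete_verts_def W_def by auto
          then show ?thesis using step.IH 1 zn RH by blast
        next
          case 2
          then have "{y, z} = {y, u}" using cond[rule_format, of y "{y, z}"] yz pvu[of y] unfolding X_def by simp
          then have "z = u" using yzne by (auto simp: doubleton_eq_iff)
          then show ?thesis using step.IH 2 zn by blast
        next
          case 3
          then have "{y, z} = {y, w}" using cond[rule_format, of y "{y, z}"] yz pvw[of y] unfolding X_def by simp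
          then have "z = w" using yzne by (auto simp: doubleton_eq_iff)
          then show ?thesis using step.IH 3 zn by blast
        qed
      next
        case False
        then have "z \<in> Vu \<or> z \<in> Vw" using cases[OF zV] by blast
        then show ?thesis
        proof
          assume zu: "z \<in> Vu"
          then have "{y, z} = {z, u}" using cond[rule_format, of z "{y, z}"] yz pvu[of z] unfolding X_def by simp
          then have "y = u" using yzne by (auto simp: doubleton_eq_iff)
          then show ?thesis using step.IH uW zu disj False by auto
        next
          assume zw: "z \<in> Vw"
          then have "{y, z} = {z, w}" using cond[rule_format, of z "{y, z}"] yz pvw[of z] unfolding X_def by simp
          then have "y = w" using yzne by (auto simp: doubleton_eq_iff)
          then show ?thesis using step.IH wW zw disj False by auto
        qed
      qed
    qed
    then show "(a, b) \<in> {(x, y). {x, y} \<in> H}\<^sup>*" using Rt b by blast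
  qed
  have nb: "\<exists>x. e = {v, x} \<and> e \<in> H" if v: "v \<in> W - {u, w}" and e: "e \<in> t" "v \<in> e" for v e
  proof -
    obtain p q where pq: "e = {p, q}" "p \<in> V" "q \<in> V" "p \<noteq> q" using ted e by blast
    then obtain x where x: "e = {v, x}" "x \<in> V" "x \<noteq> v" using e by auto
    have "x \<notin> X"
    proof
      assume xX: "x \<in> X"
      then have "e = pv x" using cond[rule_format, of x e] e x by simp
      then have "v \<in> pv x" using e by simp
      then show False using x v unfolding pv_def by (auto split: if_splits)
    qed
    then have "e \<in> H" using x v e unfolding H_def delete_verts_def W_def by auto
    then show ?thesis using x by blast
  qed
  have deg2: "\<forall>v\<in>W-{u,w}. \<exists>x y. x \<noteq> y \<and> {v,x} \<in> H \<and> {v,y} \<in> H"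
  proof
    fix v assume v: "v \<in> W - {u, w}"
    have vV: "v \<in> V" using v W_def by auto
    obtain e0 where e0: "e0 \<in> t" "v \<in> e0" using tree_has_edge[OF st vV] by blast
    have fin: "finite {e\<in>t. v \<in> e}" by simp
    have "degree t v \<noteq> 0" unfolding degree_def using e0 fin by auto
    then have "degree t v \<ge> 2" using noleaf v by (metis DiffD1 One_nat_def less_2_cases not_le)
    then obtain e1 e2 where e12: "e1 \<in> t" "v \<in> e1" "e2 \<in> t" "v \<in> e2" "e1 \<noteq> e2"
      using card_two[OF fin] unfolding degree_def by auto
    obtain x1 where x1: "e1 = {v, x1}" "e1 \<in> H" using nb[OF v e12(1,2)] by blast
    obtain x2 where x2: "e2 = {v, x2}" "e2 \<in> H" using nb[OF v e12(3,4)] by blast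
    show "\<exists>x y. x \<noteq> y \<and> {v,x} \<in> H \<and> {v,y} \<in> H" using x1 x2 e12(5) by blast
  qed
  have finW: "finite W" by simp
  obtain L where L: "distinct L" "set L = W" "hd L = u" "last L = w" "H = pe L"
    using tree_to_path[OF finW Hsub acyc conn uW wW uw deg2] by blast
  have Lne: "L \<noteq> []" using L uW by auto
  have lenL: "length L \<ge> 2"
  proof (rule ccontr)
    assume "\<not> length L \<ge> 2"
    then obtain x where "L = [x]" using Lne by (cases L; cases "tl L") auto
    then show False using L uw by simp
  qed
  have hp: "ham_path W u w H"
    unfolding ham_path_def using L Lne pe_nth[of L] by blast
  have tH: "t = H \<union> PP"
  proof
    show "t \<subseteq> H \<union> PP"
    proof
      fix e assume e: "e \<in> t"
      show "e \<in> H \<union> PP"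
      proof (cases "e \<inter> X = {}")
        case True then show ?thesis using e unfolding H_def delete_verts_def by blast
      next
        case False
        then obtain v where "v \<in> e" "v \<in> X" by blast
        then have "e = pv v" using cond[rule_format, of v e] e by simp
        then show ?thesis using \<open>v \<in> X\<close> unfolding PP_def X_def by blast
      qed
    qed
    show "H \<union> PP \<subseteq> t" using pvt unfolding H_def delete_verts_def PP_def X_def by auto
  qed
  have dHP: "H \<inter> PP = {}" using v_pv unfolding H_def delete_verts_def PP_def X_def by blast
  have key: False if x: "x \<in> W" "\<forall>v\<in>X. x \<notin> pv v" and L': "distinct L'" "pe L' = H" "hd L' = x"
    "length L' \<ge> 2" for x L'
  proof -
    obtain y rest where yr: "L' = x # y # rest" using L'
      by (cases L'; cases "tl L'") auto
    have "{e\<in>t. x \<in> e} = {e\<in>H. x \<in> e}"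
    proof (rule set_eqI, rule iffI)
      fix e assume e: "e \<in> {e\<in>t. x \<in> e}"
      have "e \<inter> X = {}"
      proof (rule ccontr)
        assume "e \<inter> X \<noteq> {}"
        then obtain v where "v \<in> e" "v \<in> X" by blast
        then have "e = pv v" using cond[rule_format, of v e] e by simp
        then show False using x e \<open>v \<in> X\<close> by blast
      qed
      then show "e \<in> {e\<in>H. x \<in> e}" using e unfolding H_def delete_verts_def by blast
    qed (auto simp: H_def delete_verts_def)
    also have "\<dots> = {e\<in>pe (x # y # rest). x \<in> e}" using L'(2) yr by simp
    also have "\<dots> = {{x, y}}" by (rule pe_hd) (use L'(1) yr in simp)
    finally have "degree t x = 1" unfolding degree_def by simp
    then show False using noleaf x by blast
  qed
  have Vune: "Vu \<noteq> {}"
  proof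
    assume "Vu = {}"
    then have "\<forall>v\<in>X. u \<notin> pv v" using uX uw unfolding X_def pv_def by auto
    then show False using key[OF uW _ L(1) L(5)[symmetric] L(3) lenL] by blast
  qed
  have Vwne: "Vw \<noteq> {}"
  proof
    assume "Vw = {}"
    then have "\<forall>v\<in>X. w \<notin> pv v" using wX uw unfolding X_def pv_def by auto
    moreover have "distinct (rev L)" "pe (rev L) = H" "hd (rev L) = w" "length (rev L) \<ge> 2"
      using L lenL Lne by (auto simp: pe_rev hd_rev)
    ultimately show False using key[OF wW] by blast
  qed
  show ?thesis using hp tH dHP Vune Vwne unfolding W_def H_def X_def by blast
qed

end


context lsetup begin

lemma ceI: "a \<in> V \<Longrightarrow> b \<in> V \<Longrightarrow> a \<noteq> b \<Longrightarrow> {a, b} \<in> complete_edges V"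
  unfolding complete_edges_def by blast

lemma path_Tk:
  assumes Vune: "Vu \<noteq> {}" and Vwne: "Vw \<noteq> {}" and hp: "ham_path (V - (Vu \<union> Vw)) u w p"
  shows "p \<union> PP \<in> Tk V k u w Vu Vw \<and> delete_verts (p \<union> PP) (Vu \<union> Vw) = p \<and> p \<inter> PP = {}"
proof -
  define X where "X = Vu \<union> Vw"
  define W where "W = V - X"
  obtain L where L: "distinct L" "set L = W" "L \<noteq> []" "hd L = u" "last L = w"
    "p = {{L ! i, L ! Suc i} | i. i < length L - 1}"
    using hp unfolding ham_path_def W_def X_def by blast
  have pL: "p = pe L" using L(6) pe_nth[of L] by simp
  define t where "t = pe L \<union> PP"
  have XV: "X \<subseteq> V" and uX: "u \<notin> X" and wX: "w \<notin> X" using Vsub unfolding X_def by auto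
  have uW: "u \<in> W" and wW: "w \<in> W" using uV wV uX wX unfolding W_def by auto
  have lenL: "length L \<ge> 2"
  proof (rule ccontr)
    assume "\<not> length L \<ge> 2"
    then obtain x where "L = [x]" using L(3) by (cases L; cases "tl L") auto
    then show False using L uw by simp
  qed
  have pvu: "\<And>x. x \<in> Vu \<Longrightarrow> pv x = {x, u}" unfolding pv_def by simp
  have pvw: "\<And>x. x \<in> Vw \<Longrightarrow> pv x = {x, w}" using disj unfolding pv_def by auto
  have PPe: "(\<exists>v\<in>Vu. e = {v, u}) \<or> (\<exists>v\<in>Vw. e = {v, w})" if e: "e \<in> PP" for e
  proof -
    obtain v where v: "v \<in> Vu \<union> Vw" "e = pv v" using e unfolding PP_def by blast
    show ?thesis
    proof (cases "v \<in> Vu")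
      case True then show ?thesis using v pvu by blast
    next
      case False then have "v \<in> Vw" using v by blast
      then show ?thesis using v pvw by blast
    qed
  qed
  have PPi1: "{v, u} \<in> PP" if v: "v \<in> Vu" for v
  proof -
    have "pv v \<in> PP" unfolding PP_def using v by blast
    then show ?thesis using pvu[OF v] by simp
  qed
  have PPi2: "{v, w} \<in> PP" if v: "v \<in> Vw" for v
  proof -
    have "pv v \<in> PP" unfolding PP_def using v by blast
    then show ?thesis using pvw[OF v] by simp
  qed
  have peW: "\<And>e. e \<in> pe L \<Longrightarrow> e \<subseteq> W" using pe_sub L(2) by blast
  have XW: "X \<inter> W = {}" unfolding W_def by blast
  have u0: "L ! 0 = u" using L(3,4) by (simp add: hd_conv_nth)
  have wl: "L ! (length L - 1) = w" using L(3,5) by (simp add: last_conv_nth)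
  have sub: "t \<subseteq> complete_edges V"
  proof
    fix e assume "e \<in> t"
    then show "e \<in> complete_edges V"
    proof (cases "e \<in> pe L")
      case True
      obtain a b where ab: "e = {a, b}" "a \<noteq> b" "a \<in> set L" "b \<in> set L"
        using pe_distinct[OF L(1) True] by blast
      have "a \<in> V" "b \<in> V" using ab(3,4) L(2) unfolding W_def by auto
      then show ?thesis using ab ceI[of a b] by simp
    next
      case False
      then have eP: "e \<in> PP" using \<open>e \<in> t\<close> unfolding t_def by blast
      show ?thesis
        using PPe[OF eP]
      proof (elim disjE bexE)
        fix v assume v: "v \<in> Vu" "e = {v, u}"
        then have "v \<in> V" "v \<noteq> u" using Vsub by auto
        then show ?thesis using v uV ceI[of v u] by simp
      next
        fix v assume v: "v \<in> Vw" "e = {v, w}"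
        then have "v \<in> V" "v \<noteq> w" using Vsub by auto
        then show ?thesis using v wV ceI[of v w] by simp
      qed
    qed
  qed
  let ?R = "{(x, y). {x, y} \<in> t}"
  have ptt: "pe L \<subseteq> t" unfolding t_def by blast
  have reach: "(u, x) \<in> ?R\<^sup>*" if x: "x \<in> V" for x
  proof -
    have "x \<in> W \<or> x \<in> Vu \<or> x \<in> Vw" using x unfolding W_def X_def by blast
    moreover have "x \<in> W \<Longrightarrow> (u, x) \<in> ?R\<^sup>*" using walk_reach[OF ptt] L(2,4) by blast
    moreover have "x \<in> Vu \<Longrightarrow> (u, x) \<in> ?R\<^sup>*"
    proof -
      assume xu: "x \<in> Vu"
      have "{u, x} \<in> t" using PPi1[OF xu] insert_commute[of x u "{}"] unfolding t_def by simp
      then show ?thesis by (intro r_into_rtrancl) simp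
    qed
    moreover have "x \<in> Vw \<Longrightarrow> (u, x) \<in> ?R\<^sup>*"
    proof -
      assume xw: "x \<in> Vw"
      have "(u, w) \<in> ?R\<^sup>*" using walk_reach[OF ptt] L(2,4) wW by blast
      moreover have "(w, x) \<in> ?R" using PPi2[OF xw] insert_commute[of x w "{}"] unfolding t_def by simp
      ultimately show ?thesis by (rule rtrancl_into_rtrancl)
    qed
    ultimately show ?thesis by blast
  qed
  have symR: "sym (?R\<^sup>*)" by (rule sym_rtrancl) (simp add: sym_def insert_commute)
  have conn: "connected_graph V t"
    unfolding connected_graph_def
  proof (intro ballI)
    fix a b assume "a \<in> V" "b \<in> V"
    then have "(u, a) \<in> ?R\<^sup>*" "(u, b) \<in> ?R\<^sup>*" using reach by auto
    then have "(a, u) \<in> ?R\<^sup>*" "(u, b) \<in> ?R\<^sup>*" using symD[OF symR] by blast+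
    then show "(a, b) \<in> ?R\<^sup>*" by (rule rtrancl_trans)
  qed
  define rank where "rank x = (if x \<in> set L then (THE i. i < length L \<and> L ! i = x) else length L)" for x
  have rank_nth: "rank (L ! i) = i" if "i < length L" for i
  proof -
    have "(THE j. j < length L \<and> L ! j = L ! i) = i"
      using that L(1) by (auto simp: nth_eq_iff_index_eq)
    then show ?thesis using that unfolding rank_def by simp
  qed
  have rank_out: "rank x = length L" if "x \<notin> set L" for x using that unfolding rank_def by simp
  define f where "f x = (if x \<in> set L then L ! (rank x - 1) else if x \<in> Vu then u else w)" for x
  have XL: "\<And>v. v \<in> X \<Longrightarrow> v \<notin> set L" using L(2) XW by blast
  have acyc: "\<not> has_cycle t"
  proof (rule acyclic_rank[of t rank f])
    fix x y assume xy: "{x, y} \<in> t"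
    show "rank x \<noteq> rank y"
    proof (cases "{x, y} \<in> pe L")
      case True
      then obtain i where i: "i < length L - 1" "{x, y} = {L ! i, L ! Suc i}" using pe_nth[of L] by auto
      have i1: "i < length L" "Suc i < length L" using i by auto
      show ?thesis using i(2) rank_nth[OF i1(1)] rank_nth[OF i1(2)] by (auto simp: doubleton_eq_iff)
    next
      case False
      then have "{x, y} \<in> PP" using xy unfolding t_def by blast
      then show ?thesis
      proof (rule PPe[THEN disjE])
        assume "\<exists>v\<in>Vu. {x, y} = {v, u}"
        then obtain v where v: "v \<in> Vu" "{x, y} = {v, u}" by blast
        have "rank v = length L" using XL[of v] v rank_out unfolding X_def by blast
        moreover have "rank u = 0" using rank_nth[of 0] u0 L(3) by simp
        ultimately show ?thesis using v L(3) by (auto simp: doubleton_eq_iff)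
      next
        assume "\<exists>v\<in>Vw. {x, y} = {v, w}"
        then obtain v where v: "v \<in> Vw" "{x, y} = {v, w}" by blast
        have "rank v = length L" using XL[of v] v rank_out unfolding X_def by blast
        moreover have "rank w = length L - 1" using rank_nth[of "length L - 1"] wl L(3) by simp
        ultimately show ?thesis using v L(3) lenL by (auto simp: doubleton_eq_iff)
      qed
    qed
  next
    fix x y assume xy: "{x, y} \<in> t" and lt: "rank y < rank x"
    show "y = f x"
    proof (cases "{x, y} \<in> pe L")
      case True
      then obtain i where i: "i < length L - 1" "{x, y} = {L ! i, L ! Suc i}" using pe_nth[of L] by auto
      then consider "x = L ! i" "y = L ! Suc i" | "x = L ! Suc i" "y = L ! i" by (auto simp: doubleton_eq_iff)
      then show ?thesis
      proof cases
        case 1 then show ?thesis using lt rank_nth[of i] rank_nth[of "Suc i"] i by simp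
      next
        case 2
        have "x \<in> set L" using 2 i by simp
        then show ?thesis using 2 rank_nth[of "Suc i"] i unfolding f_def by simp
      qed
    next
      case False
      then have "{x, y} \<in> PP" using xy unfolding t_def by blast
      then show ?thesis
      proof (rule PPe[THEN disjE])
        assume "\<exists>v\<in>Vu. {x, y} = {v, u}"
        then obtain v where v: "v \<in> Vu" "{x, y} = {v, u}" by blast
        have rv: "rank v = length L" and vL: "v \<notin> set L" using XL[of v] v rank_out unfolding X_def by blast+
        have ru: "rank u = 0" using rank_nth[of 0] u0 L(3) by simp
        consider "x = v" "y = u" | "x = u" "y = v" using v by (auto simp: doubleton_eq_iff)
        then show ?thesis
        proof cases
          case 1 then show ?thesis using vL v unfolding f_def by simp
        next
          case 2 then show ?thesis using lt rv ru by simp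
        qed
      next
        assume "\<exists>v\<in>Vw. {x, y} = {v, w}"
        then obtain v where v: "v \<in> Vw" "{x, y} = {v, w}" by blast
        have rv: "rank v = length L" and vL: "v \<notin> set L" using XL[of v] v rank_out unfolding X_def by blast+
        have rw: "rank w = length L - 1" using rank_nth[of "length L - 1"] wl L(3) by simp
        have vu: "v \<notin> Vu" using v disj by blast
        consider "x = v" "y = w" | "x = w" "y = v" using v by (auto simp: doubleton_eq_iff)
        then show ?thesis
        proof cases
          case 1 then show ?thesis using vL vu unfolding f_def by simp
        next
          case 2 then show ?thesis using lt rv rw by simp
        qed
      qed
    qed
  qed
  have st: "spanning_tree V t" unfolding spanning_tree_def using sub conn acyc by blast
  have two: "degree t x \<ge> 2" if x: "x \<in> W" for x
  proof -
    obtain i where i: "i < length L" "x = L ! i" using x L(2) by (metis in_set_conv_nth)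
    have "\<exists>e1 e2. e1 \<in> t \<and> e2 \<in> t \<and> x \<in> e1 \<and> x \<in> e2 \<and> e1 \<noteq> e2"
    proof (cases "i = 0")
      case True
      obtain v where v: "v \<in> Vu" using Vune by blast
      have "{L ! 0, L ! Suc 0} \<in> pe L" using pe_nth[of L] lenL by force
      moreover have "{v, u} \<in> PP" using PPi1[OF v] .
      moreover have "v \<notin> {L ! 0, L ! Suc 0}"
      proof -
        have "L ! 0 \<in> set L" by (rule nth_mem) (use lenL L(3) in simp)
        moreover have "L ! Suc 0 \<in> set L" by (rule nth_mem) (use lenL L(3) in simp)
        ultimately show ?thesis using XL[of v] v unfolding X_def by auto
      qed
      ultimately show ?thesis using True i u0 unfolding t_def by (intro exI[of _ "{L ! 0, L ! Suc 0}"] exI[of _ "{v, u}"]) auto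
    next
      case False
      show ?thesis
      proof (cases "i = length L - 1")
        case True
        obtain v where v: "v \<in> Vw" using Vwne by blast
        have "{L ! (length L - 2), L ! Suc (length L - 2)} \<in> pe L" using pe_nth[of L] lenL by force
        moreover have "Suc (length L - 2) = length L - 1" using lenL by simp
        moreover have "{v, w} \<in> PP" using PPi2[OF v] .
        moreover have "v \<notin> {L ! (length L - 2), L ! (length L - 1)}"
        proof -
          have "L ! (length L - 2) \<in> set L" by (rule nth_mem) (use lenL L(3) in simp)
          moreover have "L ! (length L - 1) \<in> set L" by (rule nth_mem) (use lenL L(3) in simp)
          ultimately show ?thesis using XL[of v] v unfolding X_def by auto
        qed
        ultimately show ?thesis using True i wl unfolding t_def
          by (intro exI[of _ "{L ! (length L - 2), L ! (length L - 1)}"] exI[of _ "{v, w}"]) auto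
      next
        case False2: False
        have "i - 1 < length L - 1" using i False by simp
        then have e1: "{L ! (i - 1), L ! Suc (i - 1)} \<in> pe L" using pe_nth[of L] by blast
        have s: "Suc (i - 1) = i" using False by simp
        have "i < length L - 1" using i False2 by simp
        then have e2: "{L ! i, L ! Suc i} \<in> pe L" using pe_nth[of L] by blast
        have "L ! (i - 1) \<noteq> L ! Suc i" using L(1) i False2 by (simp add: nth_eq_iff_index_eq)
        moreover have "L ! (i - 1) \<noteq> L ! i" using L(1) i False by (simp add: nth_eq_iff_index_eq)
        ultimately have "{L ! (i - 1), L ! i} \<noteq> {L ! i, L ! Suc i}" by (auto simp: doubleton_eq_iff)
        then show ?thesis using e1 e2 s i unfolding t_def
          by (intro exI[of _ "{L ! (i - 1), L ! i}"] exI[of _ "{L ! i, L ! Suc i}"]) auto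
      qed
    qed
    then obtain e1 e2 where "e1 \<in> t" "e2 \<in> t" "x \<in> e1" "x \<in> e2" "e1 \<noteq> e2" by blast
    then show ?thesis unfolding degree_def by (intro card_ge_two[of _ e1 e2]) auto
  qed
  have "leaves V t \<subseteq> X"
  proof
    fix x assume "x \<in> leaves V t"
    then have "x \<in> V" "degree t x = 1" unfolding leaves_def by auto
    then show "x \<in> X" using two[of x] unfolding W_def by force
  qed
  then have lk: "card (leaves V t) \<le> k" using cardk unfolding X_def by (metis card_mono finite)
  have cond: "\<forall>v\<in>X. \<forall>e\<in>t. v \<in> e \<longrightarrow> e = pv v"
  proof (intro ballI impI)
    fix v e assume v: "v \<in> X" and e: "e \<in> t" and ve: "v \<in> e"
    have "e \<notin> pe L" using peW v ve XW by blast
    then have "e \<in> PP" using e unfolding t_def by blast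
    then obtain v' where v': "v' \<in> X" "e = pv v'" unfolding PP_def X_def by blast
    have "v \<noteq> u" "v \<noteq> w" using v uX wX by auto
    then have "v = v'" using ve v' unfolding pv_def by (auto split: if_splits)
    then show "e = pv v" using v' by simp
  qed
  have c2: "(\<forall>v\<in>Vu. \<forall>e\<in>t. v \<in> e \<longrightarrow> e = {v, u}) \<and> (\<forall>v\<in>Vw. \<forall>e\<in>t. v \<in> e \<longrightarrow> e = {v, w})"
    by (rule cond_iff[THEN iffD2]) (use cond in \<open>simp add: X_def\<close>)
  have tk: "t \<in> Tk V k u w Vu Vw"
    unfolding Tk_def using st lk c2 by simp
  have PX: "e \<inter> X \<noteq> {}" if eP: "e \<in> PP" for e
  proof -
    obtain v where "v \<in> X" "e = pv v" using eP unfolding PP_def X_def by blast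
    then show ?thesis using v_pv[of v] by blast
  qed
  have dv: "delete_verts t X = pe L"
  proof
    show "delete_verts t X \<subseteq> pe L"
    proof
      fix e assume "e \<in> delete_verts t X"
      then have "e \<in> t" "e \<inter> X = {}" unfolding delete_verts_def by auto
      then show "e \<in> pe L" using PX unfolding t_def by blast
    qed
    show "pe L \<subseteq> delete_verts t X" unfolding delete_verts_def t_def using peW XW by blast
  qed
  have dj: "pe L \<inter> PP = {}"
  proof (rule ccontr)
    assume "pe L \<inter> PP \<noteq> {}"
    then obtain e where "e \<in> pe L" "e \<in> PP" by blast
    then show False using PX[of e] peW[of e] XW by blast
  qed
  show ?thesis using tk dv dj pL unfolding t_def X_def by simp
qed

end


theorem lemma3:
  fixes V :: "('a::finite) set" and n k :: nat and u w :: 'a and Vu Vw Vuw :: "'a set"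
    and t1 t2 :: "'a set set"
  assumes "card V = n"
    and "0 < k" and "k < n"
    and "u \<in> V" and "w \<in> V" and "u \<noteq> w"
    and "Vuw \<subseteq> V - {u, w}" and "card Vuw = k"
    and "Vuw = Vu \<union> Vw" and "Vu \<inter> Vw = {}"
    and "t1 \<in> Tk V k u w Vu Vw" and "t2 \<in> Tk V k u w Vu Vw"
  shows "\<not> adjacent_vertices (LCMST V k) (charvec t1) (charvec t2) \<longleftrightarrow>
         \<not> adjacent_vertices (HP (V - Vuw) u w)
             (charvec (delete_verts t1 Vuw)) (charvec (delete_verts t2 Vuw))"
proof -
  have Vuw: "Vuw = Vu \<union> Vw" by fact
  interpret lsetup V k u w Vu Vw
    by unfold_locales (use assms in auto)
  define Tk' where "Tk' = Tk V k u w Vu Vw"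
  define S where "S = {t. spanning_tree V t \<and> card (leaves V t) \<le> k}"
  define LC where "LC = LCMST V k"
  have LC: "LC = convex hull (charvec ` S)" unfolding LC_def LCMST_def S_def ..
  have "charvec ` S \<subseteq> {x. inner avec x \<ge> - real k}" using inner_ge unfolding S_def by auto
  then have "convex hull (charvec ` S) \<subseteq> {x. inner avec x \<ge> - real k}"
    by (rule hull_minimal) (rule convex_halfspace_ge)
  then have ge: "\<And>x. x \<in> LC \<Longrightarrow> inner avec x \<ge> - real k" using LC by auto
  define F where "F = LC \<inter> {x. inner avec x = - real k}"
  have cLC: "compact LC" "convex LC" unfolding LC
    by (rule compact_convex_hull, rule finite_imp_compact, simp) (rule convex_convex_hull)
  have face: "F face_of LC" unfolding F_def
    by (rule face_of_Int_supporting_hyperplane_ge[OF cLC(2) ge])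
  have sub1: "charvec ` Tk' \<subseteq> F"
  proof
    fix x assume "x \<in> charvec ` Tk'"
    then obtain t where t: "t \<in> Tk'" "x = charvec t" by blast
    then have "t \<in> S" "inner avec (charvec t) = - real k" using Tk_iff[of t] unfolding Tk'_def S_def by auto
    then show "x \<in> F" unfolding F_def LC using t hull_subset[of "charvec ` S" convex] by blast
  qed
  have Fhull: "F = convex hull (charvec ` Tk')"
  proof
    show "convex hull (charvec ` Tk') \<subseteq> F"
      by (rule hull_minimal[OF sub1]) (rule face_of_imp_convex[OF face])
    have cF: "compact F" "convex F"
      using face_of_imp_compact[OF cLC(2) cLC(1) face] face_of_imp_convex[OF face] by auto
    have "{x. x extreme_point_of F} \<subseteq> charvec ` Tk'"
    proof
      fix x assume "x \<in> {x. x extreme_point_of F}"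
      then have "x extreme_point_of LC" "x \<in> F" using extreme_point_of_face[OF face] by auto
      then have "x \<in> charvec ` S" "inner avec x = - real k"
        using extreme_point_of_convex_hull[of x "charvec ` S"] LC unfolding F_def by auto
      then obtain t where "t \<in> S" "x = charvec t" "inner avec (charvec t) = - real k" by blast
      then have "t \<in> Tk'" using Tk_iff[of t] unfolding Tk'_def S_def by auto
      then show "x \<in> charvec ` Tk'" using \<open>x = charvec t\<close> by blast
    qed
    then have "convex hull {x. x extreme_point_of F} \<subseteq> convex hull (charvec ` Tk')"
      by (rule hull_mono)
    then show "F \<subseteq> convex hull (charvec ` Tk')" using Krein_Milman_Minkowski[OF cF] by simp
  qed
  define c where "c = charvec PP"
  define HPs where "HPs = {p. ham_path (V - Vuw) u w p}"
  have st1: "ham_path (V - Vuw) u w (delete_verts t1 Vuw) \<and>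
    t1 = delete_verts t1 Vuw \<union> PP \<and> delete_verts t1 Vuw \<inter> PP = {} \<and> Vu \<noteq> {} \<and> Vw \<noteq> {}"
    using Tk_struct[OF assms(11)] Vuw by simp
  have cv: "charvec t = c + charvec (delete_verts t Vuw)" and hpt: "delete_verts t Vuw \<in> HPs"
    if "t \<in> Tk'" for t
  proof -
    have s: "ham_path (V - Vuw) u w (delete_verts t Vuw) \<and>
      t = delete_verts t Vuw \<union> PP \<and> delete_verts t Vuw \<inter> PP = {}"
      using Tk_struct[of t] that Vuw unfolding Tk'_def by simp
    then have "charvec t = charvec (delete_verts t Vuw) + charvec PP"
      using charvec_union[of "delete_verts t Vuw" PP] by metis
    then show "charvec t = c + charvec (delete_verts t Vuw)" unfolding c_def by (simp add: add.commute)
    show "delete_verts t Vuw \<in> HPs" using s unfolding HPs_def by simp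
  qed
  have img: "charvec ` Tk' = (+) c ` (charvec ` HPs)"
  proof
    show "charvec ` Tk' \<subseteq> (+) c ` (charvec ` HPs)"
      using cv hpt by blast
    show "(+) c ` (charvec ` HPs) \<subseteq> charvec ` Tk'"
    proof
      fix x assume "x \<in> (+) c ` (charvec ` HPs)"
      then obtain p where p: "p \<in> HPs" "x = c + charvec p" by blast
      have "p \<union> PP \<in> Tk V k u w Vu Vw \<and> delete_verts (p \<union> PP) (Vu \<union> Vw) = p \<and> p \<inter> PP = {}"
        using path_Tk st1 p(1) Vuw unfolding HPs_def by simp
      then have "p \<union> PP \<in> Tk'" "charvec (p \<union> PP) = x"
        using charvec_union[of p PP] p(2) unfolding Tk'_def c_def by (auto simp: add.commute)
      then show "x \<in> charvec ` Tk'" by blast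
    qed
  qed
  have F2: "F = (+) c ` HP (V - Vuw) u w"
    unfolding Fhull img HP_def HPs_def[symmetric] by (rule convex_hull_translation)
  have in1: "charvec t1 \<in> F" and in2: "charvec t2 \<in> F" using sub1 assms(11,12) unfolding Tk'_def by auto
  have e1: "charvec t1 = c + charvec (delete_verts t1 Vuw)" using cv assms(11) unfolding Tk'_def by blast
  have e2: "charvec t2 = c + charvec (delete_verts t2 Vuw)" using cv assms(12) unfolding Tk'_def by blast
  have "adjacent_vertices (LCMST V k) (charvec t1) (charvec t2) \<longleftrightarrow>
        adjacent_vertices F (charvec t1) (charvec t2)"
    unfolding LC_def[symmetric] by (rule adj_face[OF face in1 in2])
  also have "\<dots> \<longleftrightarrow> adjacent_vertices (HP (V - Vuw) u w)
             (charvec (delete_verts t1 Vuw)) (charvec (delete_verts t2 Vuw))"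
    unfolding F2 e1 e2 by (rule adj_transl)
  finally show ?thesis by simp
qed


end
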